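(* $\lim_{k\to\infty,\ k\text{ odd}}p_k^\star=\frac12$.
   Context: For odd $k\ge3$, $p,x\in[0,1]$: $F_{p,k}(x)=\Pr[\mathrm{Bin}(k,(1-p)x)\ge(k+1)/2]$. $p_k^\star\in[1/9,1/2)$ is the (unique) value such that for $0\le p<p_k^\star$ the equation $F_{p,k}(x)=x$ on $[0,1]$ has exactly three solutions, for $p=p_k^\star$ exactly two, and for $p>p_k^\star$ its only solution is $0$. *)

theory Defs
  imports Complex_Main
begin

text \<open>F_{p,k}(x) = Pr[Bin(k,(1-p)x) \<ge> (k+1)/2], written out as the binomial tail sum.
  For odd k, (k+1)/2 = Suc k div 2 exactly.\<close>
definition F :: "real \<Rightarrow> nat \<Rightarrow> real \<Rightarrow> real" where
  "F p k x = (\<Sum>i\<in>{i. Suc k div 2 \<le> i \<and> i \<le> k}.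
       real (k choose i) * ((1 - p) * x) ^ i * (1 - (1 - p) * x) ^ (k - i))"

definition fixpts :: "real \<Rightarrow> nat \<Rightarrow> real set" where
  "fixpts p k = {x. 0 \<le> x \<and> x \<le> 1 \<and> F p k x = x}"

definition pstar :: "nat \<Rightarrow> real" where
  "pstar k = (THE p. 1/9 \<le> p \<and> p < 1/2
     \<and> (\<forall>q. 0 \<le> q \<and> q < p \<longrightarrow> finite (fixpts q k) \<and> card (fixpts q k) = 3)
     \<and> finite (fixpts p k) \<and> card (fixpts p k) = 2
     \<and> (\<forall>q. p < q \<and> q \<le> 1 \<longrightarrow> fixpts q k = {0}))"

end

theory Submission
  imports Defs
begin

lemma tail_deriv:
  fixes y :: real
  assumes "n \<le> K"
  shows "((\<lambda>y. \<Sum>i\<in>{Suc n..Suc K}. real (Suc K choose i) * y^i * (1-y)^(Suc K - i))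
     has_real_derivative (real (Suc K) * real (K choose n) * y^n * (1-y)^(K-n))) (at y)"
  using assms
proof (induction n rule: inc_induct)
  case base
  have e: "(\<lambda>y::real. \<Sum>i\<in>{Suc K..Suc K}. real (Suc K choose i) * y^i * (1-y)^(Suc K - i)) = (\<lambda>y. y^Suc K)"
    by simp
  show ?case unfolding e using DERIV_pow[of "Suc K" y] by simp
next
  case (step n)
  define e where "e = K - Suc n"
  have Kn: "K - n = Suc e" using step.hyps(2) e_def by simp
  have sp: "{Suc n..Suc K} = insert (Suc n) {Suc (Suc n)..Suc K}" using step.hyps(2) by auto
  have fe: "(\<lambda>y::real. \<Sum>i\<in>{Suc n..Suc K}. real (Suc K choose i) * y^i * (1-y)^(Suc K - i))
     = (\<lambda>y. real (Suc K choose Suc n) * y^(Suc n) * (1-y)^(Suc e) +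
         (\<Sum>i\<in>{Suc (Suc n)..Suc K}. real (Suc K choose i) * y^i * (1-y)^(Suc K - i)))"
    unfolding sp using Kn by (simp)
  have d1: "((\<lambda>y::real. real (Suc K choose Suc n) * y^(Suc n) * (1-y)^(Suc e)) has_real_derivative
     real (Suc K choose Suc n) * (real (Suc n) * y^n * (1-y)^(Suc e) - y^(Suc n) * (real (Suc e) * (1-y)^e))) (at y)"
  proof -
    have a: "((\<lambda>y::real. y^Suc n) has_real_derivative real (Suc n) * y^n) (at y)"
      using DERIV_pow[of "Suc n" y] by simp
    have b: "((\<lambda>y::real. (1-y)^Suc e) has_real_derivative real (Suc e) * (1-y)^e * (-1)) (at y)"
      using DERIV_power[OF DERIV_diff[OF DERIV_const[of 1] DERIV_ident], of "Suc e"] by simp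
    have "((\<lambda>y::real. real (Suc K choose Suc n) * (y^(Suc n) * (1-y)^(Suc e))) has_real_derivative
       real (Suc K choose Suc n) * (real (Suc n) * y^n * (1-y)^(Suc e) + real (Suc e) * (1-y)^e * (-1) * y^Suc n)) (at y)"
      by (rule DERIV_cmult[OF DERIV_mult[OF a b]])
    then show ?thesis by (simp add: algebra_simps)
  qed
  have c1: "real (Suc n) * real (Suc K choose Suc n) = real (Suc K) * real (K choose n)"
    using Suc_times_binomial_eq[of K n] by (metis of_nat_mult mult.commute)
  have c2: "real (Suc e) * real (Suc K choose Suc n) = real (Suc K) * real (K choose Suc n)"
    using binomial_absorb_comp[of "Suc K" "Suc n"] Kn by (metis diff_Suc_Suc diff_Suc_1 of_nat_mult)
  have "((\<lambda>y. real (Suc K choose Suc n) * y^(Suc n) * (1-y)^(Suc e) +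
         (\<Sum>i\<in>{Suc (Suc n)..Suc K}. real (Suc K choose i) * y^i * (1-y)^(Suc K - i))) has_real_derivative
     real (Suc K choose Suc n) * (real (Suc n) * y^n * (1-y)^(Suc e) - y^(Suc n) * (real (Suc e) * (1-y)^e))
     + real (Suc K) * real (K choose Suc n) * y ^ Suc n * (1 - y) ^ (K - Suc n)) (at y)"
    by (rule DERIV_add[OF d1 step.IH])
  moreover have "real (Suc K choose Suc n) * (real (Suc n) * y^n * (1-y)^(Suc e) - y^(Suc n) * (real (Suc e) * (1-y)^e))
     + real (Suc K) * real (K choose Suc n) * y ^ Suc n * (1 - y) ^ (K - Suc n)
     = real (Suc K) * real (K choose n) * y ^ n * (1 - y) ^ (K - n)"
  proof -
    have "real (Suc K choose Suc n) * (real (Suc n) * y^n * (1-y)^(Suc e) - y^(Suc n) * (real (Suc e) * (1-y)^e))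
       = (real (Suc n) * real (Suc K choose Suc n)) * y^n * (1-y)^(Suc e) - (real (Suc e) * real (Suc K choose Suc n)) * y^(Suc n) * (1-y)^e"
      by (simp add: algebra_simps)
    also have "\<dots> = real (Suc K) * real (K choose n) * y^n * (1-y)^(Suc e) - real (Suc K) * real (K choose Suc n) * y^(Suc n) * (1-y)^e"
      unfolding c1 c2 ..
    finally show ?thesis using Kn e_def by simp
  qed
  ultimately show ?case unfolding fe by simp
qed

definition Gf :: "nat \<Rightarrow> real \<Rightarrow> real" where
  "Gf j y = (\<Sum>i\<in>{j+2..2*j+3}. real ((2*j+3) choose i) * y^i * (1-y)^(2*j+3-i))"

definition Lf :: "nat \<Rightarrow> real \<Rightarrow> real" where
  "Lf j y = (\<Sum>i\<le>j+1. real ((2*j+3) choose i) * y^i * (1-y)^(2*j+3-i))"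

definition cc :: "nat \<Rightarrow> real" where
  "cc j = real (2*j+3) * real ((2*j+2) choose (j+1))"

definition phi :: "nat \<Rightarrow> real \<Rightarrow> real" where
  "phi j y = Gf j y - cc j * y^(j+2) * (1-y)^(j+1)"

definition hh :: "nat \<Rightarrow> real \<Rightarrow> real" where
  "hh j y = y / Gf j y"

lemma F_eq: "F p (2*j+3) x = Gf j ((1-p)*x)"
proof -
  have "Suc (2*j+3) div 2 = j+2" by simp
  moreover have "{i. j+2 \<le> i \<and> i \<le> 2*j+3} = {j+2..2*j+3}" by auto
  ultimately show ?thesis unfolding F_def Gf_def by simp
qed

lemma Gf_deriv: "(Gf j has_real_derivative cc j * y^(j+1) * (1-y)^(j+1)) (at y)"
proof -
  have e: "Gf j = (\<lambda>y. \<Sum>i\<in>{Suc (Suc j)..Suc (2*j+2)}. real (Suc (2*j+2) choose i) * y^i * (1-y)^(Suc (2*j+2) - i))"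
    unfolding Gf_def by (rule ext) (simp add: numeral_eq_Suc)
  have "2*j+2 - Suc j = j+1" by simp
  then show ?thesis unfolding e cc_def using tail_deriv[of "Suc j" "2*j+2" y]
    by (simp add: numeral_eq_Suc)
qed

lemma Gf_cont: "isCont (Gf j) y"
  using Gf_deriv DERIV_isCont by blast

lemma Gf_Lf: "Gf j y + Lf j y = 1"
proof -
  have "1 = (y + (1-y))^(2*j+3)" by simp
  also have "\<dots> = (\<Sum>i\<le>2*j+3. real ((2*j+3) choose i) * y^i * (1-y)^(2*j+3-i))"
    by (rule binomial_ring)
  also have "\<dots> = (\<Sum>i\<le>(j+1)+(j+2). real ((2*j+3) choose i) * y^i * (1-y)^(2*j+3-i))"
  proof -
    have eq: "{..2*j+3} = {..(j+1)+(j+2)}" by simp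
    show ?thesis unfolding eq ..
  qed
  also have "\<dots> = Lf j y + (\<Sum>i=Suc (j+1)..(j+1)+(j+2). real ((2*j+3) choose i) * y^i * (1-y)^(2*j+3-i))"
    unfolding Lf_def by (rule sum_up_index_split)
  also have "\<dots> = Lf j y + Gf j y"
  proof -
    have eq: "{Suc (j+1)..(j+1)+(j+2)} = {j+2..2*j+3}" by auto
    show ?thesis unfolding eq Gf_def ..
  qed
  finally show ?thesis by simp
qed

lemma Gf_nonneg: "0 \<le> y \<Longrightarrow> y \<le> 1 \<Longrightarrow> 0 \<le> Gf j y"
  unfolding Gf_def by (intro sum_nonneg) auto

lemma Lf_nonneg: "0 \<le> y \<Longrightarrow> y \<le> 1 \<Longrightarrow> 0 \<le> Lf j y"
  unfolding Lf_def by (intro sum_nonneg) auto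

lemma Gf_le1: "0 \<le> y \<Longrightarrow> y \<le> 1 \<Longrightarrow> Gf j y \<le> 1"
  using Gf_Lf[of j y] Lf_nonneg[of y j] by linarith

lemma Gf_pos: assumes "0 < y" "y \<le> 1" shows "0 < Gf j y"
proof -
  have "Gf j y = (\<Sum>i\<in>insert (2*j+3) {j+2..<2*j+3}. real ((2*j+3) choose i) * y^i * (1-y)^(2*j+3-i))"
    unfolding Gf_def by (rule sum.cong) auto
  also have "\<dots> = y^(2*j+3) + (\<Sum>i\<in>{j+2..<2*j+3}. real ((2*j+3) choose i) * y^i * (1-y)^(2*j+3-i))"
    by (subst sum.insert) auto
  also have "\<dots> > 0" using assms by (intro add_pos_nonneg sum_nonneg) auto
  finally show ?thesis .
qed

lemma Gf_0: "Gf j 0 = 0"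
  unfolding Gf_def by simp

lemma Lf_1: "Lf j 1 = 0"
  unfolding Lf_def by (intro sum.neutral) auto

lemma Gf_1: "Gf j 1 = 1"
  using Gf_Lf[of j 1] Lf_1[of j] by simp

lemma Gf_small: assumes "0 \<le> y" "y \<le> 1" shows "Gf j y \<le> 2^(2*j+3) * y^2"
proof -
  have "Gf j y \<le> (\<Sum>i\<in>{j+2..2*j+3}. real ((2*j+3) choose i) * y^2)"
    unfolding Gf_def
  proof (rule sum_mono)
    fix i assume i: "i \<in> {j+2..2*j+3}"
    have "y^i \<le> y^2" using i assms by (intro power_decreasing) auto
    moreover have "(1-y)^(2*j+3-i) \<le> 1" using assms by (simp add: power_le_one)
    ultimately have "y^i * (1-y)^(2*j+3-i) \<le> y^2"
      using assms by (metis mult_left_le mult_nonneg_nonneg zero_le_power diff_ge_0_iff_ge mult.commute mult_mono' order_trans zero_le_one)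
    then show "real ((2*j+3) choose i) * y^i * (1-y)^(2*j+3-i) \<le> real ((2*j+3) choose i) * y^2"
      by (simp add: mult.assoc mult_left_mono)
  qed
  also have "\<dots> = real (\<Sum>i\<in>{j+2..2*j+3}. ((2*j+3) choose i)) * y^2"
    by (simp add: sum_distrib_right)
  also have "\<dots> \<le> real (\<Sum>i\<le>2*j+3. ((2*j+3) choose i)) * y^2"
    by (intro mult_right_mono of_nat_mono sum_mono2) auto
  also have "\<dots> = 2^(2*j+3) * y^2" by (simp add: choose_row_sum)
  finally show ?thesis .
qed

lemma cc_pos: "0 < cc j"
proof -
  have "0 < ((2*j+2) choose (j+1))" by (rule zero_less_binomial) simp
  then have "0 < real ((2*j+2) choose (j+1))" by (simp only: of_nat_0_less_iff)
  then show ?thesis unfolding cc_def by (intro mult_pos_pos) simp_all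
qed

lemma phi_deriv: "(phi j has_real_derivative cc j * real (j+1) * y^(j+1) * (1-y)^j * (2*y-1)) (at y)"
proof -
  have a: "((\<lambda>y::real. y^(j+2)) has_real_derivative real (j+2) * y^(j+1)) (at y)"
    using DERIV_pow[of "j+2" y] by simp
  have b: "((\<lambda>y::real. (1-y)^(j+1)) has_real_derivative real (j+1) * (1-y)^j * (-1)) (at y)"
    using DERIV_power[OF DERIV_diff[OF DERIV_const[of 1] DERIV_ident], of "j+1"] by simp
  have c: "((\<lambda>y. cc j * (y^(j+2) * (1-y)^(j+1))) has_real_derivative
     cc j * (real (j+2) * y^(j+1) * (1-y)^(j+1) + real (j+1) * (1-y)^j * (-1) * y^(j+2))) (at y)"
    by (rule DERIV_cmult[OF DERIV_mult[OF a b]])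
  have d: "(phi j has_real_derivative cc j * y^(j+1) * (1-y)^(j+1) -
     cc j * (real (j+2) * y^(j+1) * (1-y)^(j+1) + real (j+1) * (1-y)^j * (-1) * y^(j+2))) (at y)"
    unfolding phi_def[abs_def] using DERIV_diff[OF Gf_deriv c] by (simp add: mult.assoc)
  have gen: "C * P * (Q * (1-z)) - C * ((r+1) * P * (Q * (1-z)) + r * Q * (-1) * (P * z))
      = C * r * P * Q * (2*z-1)" for C P Q z r :: real
    by (simp add: algebra_simps)
  have p1: "y^(j+2) = y^(j+1)*y" and p2: "(1-y)^(j+1) = (1-y)^j*(1-y)" by simp_all
  have "cc j * y^(j+1) * (1-y)^(j+1) -
     cc j * (real (j+2) * y^(j+1) * (1-y)^(j+1) + real (j+1) * (1-y)^j * (-1) * y^(j+2))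
     = cc j * real (j+1) * y^(j+1) * (1-y)^j * (2*y-1)"
    unfolding p1 p2 using gen[of "cc j" "y^(j+1)" "(1-y)^j" y "real (j+1)"] by simp
  then show ?thesis using d by simp
qed

lemma phi_cont: "continuous_on S (phi j)"
proof (rule continuous_at_imp_continuous_on, rule ballI)
  fix x show "isCont (phi j) x" by (rule DERIV_isCont[OF phi_deriv])
qed

lemma phi_0: "phi j 0 = 0" unfolding phi_def Gf_0 by simp
lemma phi_1: "phi j 1 = 1" unfolding phi_def Gf_1 by simp

lemma phi_neg: assumes "0 < y" "y \<le> 1/2" shows "phi j y < 0"
proof -
  have "phi j y < phi j 0"
  proof (rule DERIV_neg_imp_decreasing_open[OF assms(1)])
    fix x :: real assume x: "0 < x" "x < y"
    have "cc j * real (j+1) * x^(j+1) * (1-x)^j * (2*x-1) < 0"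
      using x assms cc_pos[of j] by (intro mult_pos_neg) auto
    then show "\<exists>z. DERIV (phi j) x :> z \<and> z < 0" using phi_deriv by blast
  qed (rule phi_cont)
  then show ?thesis using phi_0 by simp
qed

lemma phi_incr: assumes "1/2 \<le> a" "a < b" "b \<le> 1" shows "phi j a < phi j b"
proof (rule DERIV_pos_imp_increasing_open[OF assms(2)])
  fix x :: real assume x: "a < x" "x < b"
  have "cc j * real (j+1) * x^(j+1) * (1-x)^j * (2*x-1) > 0"
    using x assms cc_pos[of j] by (intro mult_pos_pos) auto
  then show "\<exists>z. DERIV (phi j) x :> z \<and> z > 0" using phi_deriv by blast
qed (rule phi_cont)

lemma hh_deriv: assumes "Gf j y \<noteq> 0"
  shows "(hh j has_real_derivative phi j y / (Gf j y)^2) (at y)"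
proof -
  have "((\<lambda>y. y / Gf j y) has_real_derivative (1 * Gf j y - y * (cc j * y^(j+1) * (1-y)^(j+1))) / (Gf j y * Gf j y)) (at y)"
    by (rule DERIV_divide[OF DERIV_ident Gf_deriv assms])
  moreover have "(1 * Gf j y - y * (cc j * y^(j+1) * (1-y)^(j+1))) = phi j y"
    unfolding phi_def by (simp add: algebra_simps)
  ultimately show ?thesis unfolding hh_def[abs_def] by (simp add: power2_eq_square)
qed

lemma hh_cont: assumes "0 < a" "a \<le> b" "b \<le> 1" shows "continuous_on {a..b} (hh j)"
proof (rule continuous_at_imp_continuous_on, rule ballI)
  fix x assume "x \<in> {a..b}"
  then have "Gf j x \<noteq> 0" using Gf_pos[of x j] assms by auto
  then show "isCont (hh j) x" by (rule DERIV_isCont[OF hh_deriv])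
qed


lemma phi_struct: "\<exists>y0. 1/2 < y0 \<and> y0 < 1 \<and> (\<forall>y. 0 < y \<and> y < y0 \<longrightarrow> phi j y < 0)
   \<and> (\<forall>y. y0 < y \<and> y \<le> 1 \<longrightarrow> phi j y > 0)"
proof -
  have h: "phi j (1/2) < 0" by (rule phi_neg) auto
  obtain y0 where y0: "1/2 \<le> y0" "y0 \<le> 1" "phi j y0 = 0"
    using IVT'[of "phi j" "1/2" 0 1] h phi_1[of j] phi_cont by force
  have y0a: "1/2 < y0" using y0 h by (cases "y0 = 1/2") auto
  have y0b: "y0 < 1" using y0 phi_1[of j] by (cases "y0 = 1") auto
  show ?thesis
  proof (intro exI conjI allI impI)
    fix y assume y: "0 < y \<and> y < y0"
    show "phi j y < 0"
    proof (cases "y \<le> 1/2")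
      case True then show ?thesis using phi_neg y by auto
    next
      case False then show ?thesis using phi_incr[of y y0 j] y y0 by auto
    qed
  next
    fix y assume y: "y0 < y \<and> y \<le> 1"
    then show "phi j y > 0" using phi_incr[of y0 y j] y0 y0a by auto
  qed (use y0a y0b in auto)
qed

definition yz :: "nat \<Rightarrow> real" where
  "yz j = (SOME y0. 1/2 < y0 \<and> y0 < 1 \<and> (\<forall>y. 0 < y \<and> y < y0 \<longrightarrow> phi j y < 0)
   \<and> (\<forall>y. y0 < y \<and> y \<le> 1 \<longrightarrow> phi j y > 0))"

lemma yz: "1/2 < yz j" "yz j < 1" "\<And>y. 0 < y \<Longrightarrow> y < yz j \<Longrightarrow> phi j y < 0"
   "\<And>y. yz j < y \<Longrightarrow> y \<le> 1 \<Longrightarrow> phi j y > 0"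
  using someI_ex[OF phi_struct[of j]] unfolding yz_def[symmetric] by auto

lemma hh_dec: assumes "0 < a" "a < b" "b \<le> yz j" shows "hh j b < hh j a"
proof (rule DERIV_neg_imp_decreasing_open[OF assms(2)])
  fix x :: real assume x: "a < x" "x < b"
  have G: "Gf j x > 0" using Gf_pos[of x j] x assms yz(2)[of j] by auto
  have "phi j x / (Gf j x)^2 < 0" using yz(3)[of x j] x assms G by (intro divide_neg_pos) auto
  then show "\<exists>z. DERIV (hh j) x :> z \<and> z < 0" using hh_deriv[of j x] G by auto
next
  show "continuous_on {a..b} (hh j)" by (rule hh_cont) (use assms yz(2)[of j] in auto)
qed

lemma hh_inc: assumes "yz j \<le> a" "a < b" "b \<le> 1" shows "hh j a < hh j b"
proof (rule DERIV_pos_imp_increasing_open[OF assms(2)])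
  fix x :: real assume x: "a < x" "x < b"
  have G: "Gf j x > 0" using Gf_pos[of x j] x assms yz(1)[of j] by auto
  have "phi j x / (Gf j x)^2 > 0" using yz(4)[of j x] x assms G by (intro divide_pos_pos) auto
  then show "\<exists>z. DERIV (hh j) x :> z \<and> z > 0" using hh_deriv[of j x] G by auto
next
  show "continuous_on {a..b} (hh j)" by (rule hh_cont) (use assms yz(1)[of j] in auto)
qed

definition hmin :: "nat \<Rightarrow> real" where "hmin j = hh j (yz j)"

lemma hh_ge_y: assumes "0 < y" "y \<le> 1" shows "y \<le> hh j y"
proof -
  have "0 < Gf j y" "Gf j y \<le> 1" using Gf_pos Gf_le1 assms by auto
  then show ?thesis unfolding hh_def using assms by (simp add: le_divide_eq)
qed

lemma hmin_le: assumes "0 < y" "y \<le> 1" shows "hmin j \<le> hh j y"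
  unfolding hmin_def
proof (cases y "yz j" rule: linorder_cases)
  case less then show "hh j (yz j) \<le> hh j y" using hh_dec[of y "yz j" j] assms by auto
next
  case greater then show "hh j (yz j) \<le> hh j y" using hh_inc[of j "yz j" y] assms by auto
qed simp

lemma hmin_gt: "1/2 < hmin j"
  using hh_ge_y[of "yz j" j] yz(1,2)[of j] unfolding hmin_def by auto

lemma hh_1: "hh j 1 = 1" unfolding hh_def Gf_1 by simp

lemma hmin_lt1: "hmin j < 1"
  using hh_inc[of j "yz j" 1] yz(2)[of j] hh_1[of j] unfolding hmin_def by auto

definition ys :: "nat \<Rightarrow> real" where "ys j = 1 / 2^(2*j+3)"

lemma ys: "0 < ys j" "ys j < yz j" "1 \<le> hh j (ys j)"
proof -
  show p: "0 < ys j" unfolding ys_def by simp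
  have "(2::real)^3 \<le> 2^(2*j+3)" by (intro power_increasing) auto
  then have le: "ys j \<le> 1/8" unfolding ys_def by (simp add: divide_simps)
  then show "ys j < yz j" using yz(1)[of j] by simp
  have "Gf j (ys j) \<le> 2^(2*j+3) * (ys j)^2" using Gf_small[of "ys j" j] p le by simp
  also have "\<dots> = ys j" unfolding ys_def by (simp add: power2_eq_square)
  finally have "Gf j (ys j) \<le> ys j" .
  moreover have "0 < Gf j (ys j)" using Gf_pos[of "ys j" j] p le by simp
  ultimately show "1 \<le> hh j (ys j)" unfolding hh_def by (simp add: le_divide_eq)
qed

lemma fix_char: assumes "0 < 1-q" "1-q \<le> 1"
  shows "fixpts q (2*j+3) = insert 0 ((\<lambda>y. y/(1-q)) ` {y. 0<y \<and> y\<le>1 \<and> hh j y = 1-q})"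
proof (rule set_eqI, rule iffI)
  fix x assume "x \<in> fixpts q (2*j+3)"
  then have x: "0 \<le> x" "x \<le> 1" "Gf j ((1-q)*x) = x" unfolding fixpts_def F_eq by auto
  show "x \<in> insert 0 ((\<lambda>y. y/(1-q)) ` {y. 0<y \<and> y\<le>1 \<and> hh j y = 1-q})"
  proof (cases "x = 0")
    case False
    then have xp: "0 < x" using x by simp
    have y: "0 < (1-q)*x" "(1-q)*x \<le> 1" using xp x assms by (auto intro: mult_le_one)
    have "hh j ((1-q)*x) = 1-q" unfolding hh_def x(3) using xp by simp
    moreover have "x = ((1-q)*x)/(1-q)" using assms by simp
    ultimately show ?thesis using y by blast
  qed simp
next
  fix x assume "x \<in> insert 0 ((\<lambda>y. y/(1-q)) ` {y. 0<y \<and> y\<le>1 \<and> hh j y = 1-q})"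
  then consider "x = 0" | y where "x = y/(1-q)" "0<y" "y\<le>1" "hh j y = 1-q" by blast
  then show "x \<in> fixpts q (2*j+3)"
  proof cases
    case 1 then show ?thesis unfolding fixpts_def F_eq using Gf_0 by simp
  next
    case 2
    have G: "0 < Gf j (y)" "Gf j y \<le> 1" using Gf_pos Gf_le1 2 by auto
    have Gy: "Gf j y = y/(1-q)" using 2(4) G assms unfolding hh_def by (auto simp: field_simps)
    have "(1-q) * x = y" using 2(1) assms by simp
    then show ?thesis unfolding fixpts_def F_eq using Gy G 2 by auto
  qed
qed

lemma fix_q1: "fixpts 1 (2*j+3) = {0}"
  unfolding fixpts_def F_eq using Gf_0 by auto

lemma hh_inj_left: assumes "0 < y" "y \<le> yz j" "0 < y'" "y' \<le> yz j" "hh j y = hh j y'" shows "y = y'"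
proof (cases y y' rule: linorder_cases)
  case less then show ?thesis using hh_dec[of y y' j] assms by auto
next
  case greater then show ?thesis using hh_dec[of y' y j] assms by auto
qed simp

lemma hh_inj_right: assumes "yz j \<le> y" "y \<le> 1" "yz j \<le> y'" "y' \<le> 1" "hh j y = hh j y'" shows "y = y'"
proof (cases y y' rule: linorder_cases)
  case less then show ?thesis using hh_inc[of j y y'] assms by auto
next
  case greater then show ?thesis using hh_inc[of j y' y] assms by auto
qed simp

lemma hh_cont': "continuous_on {a..b} (hh j)" if "0 < a" "a \<le> b" "b \<le> 1"
  using hh_cont that by blast

lemma card3: assumes "hmin j < 1-q" "1-q \<le> 1"
  shows "finite (fixpts q (2*j+3)) \<and> card (fixpts q (2*j+3)) = 3"
proof -
  define a where "a = 1-q"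
  have a: "hmin j < a" "a \<le> 1" "0 < a" using assms hmin_gt[of j] unfolding a_def by auto
  have yz1: "1/2 < yz j" "yz j < 1" using yz by auto
  obtain y2 where y2: "yz j \<le> y2" "y2 \<le> 1" "hh j y2 = a"
    using IVT'[of "hh j" "yz j" a 1] a hh_1[of j] yz1 hh_cont'[of "yz j" 1 j]
    unfolding hmin_def by force
  have y2b: "yz j < y2" using y2 a unfolding hmin_def by (cases "y2 = yz j") auto
  have ys: "0 < ys j" "ys j < yz j" "1 \<le> hh j (ys j)" using ys by auto
  obtain y1 where y1: "ys j \<le> y1" "y1 \<le> yz j" "hh j y1 = a"
    using IVT2'[of "hh j" "yz j" a "ys j"] a ys hh_cont'[of "ys j" "yz j" j] yz1
    unfolding hmin_def by force
  have y1b: "y1 < yz j" using y1 a unfolding hmin_def by (cases "y1 = yz j") auto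
  have S: "{y. 0<y \<and> y\<le>1 \<and> hh j y = a} = {y1, y2}"
  proof (rule set_eqI, rule iffI)
    fix y assume y: "y \<in> {y. 0<y \<and> y\<le>1 \<and> hh j y = a}"
    show "y \<in> {y1, y2}"
    proof (cases "y \<le> yz j")
      case True
      then have "y = y1" using hh_inj_left[of y j y1] y y1 ys by auto
      then show ?thesis by simp
    next
      case False
      then have "y = y2" using hh_inj_right[of j y y2] y y2 by auto
      then show ?thesis by simp
    qed
  next
    fix y assume "y \<in> {y1, y2}"
    then show "y \<in> {y. 0<y \<and> y\<le>1 \<and> hh j y = a}" using y1 y2 ys yz1 by auto
  qed
  have fx: "fixpts q (2*j+3) = {0, y1/a, y2/a}"
    using fix_char[of q j] a S unfolding a_def by simp
  have d: "0 \<noteq> y1/a" "0 \<noteq> y2/a" "y1/a \<noteq> y2/a" using a y1b y2b y1 ys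
    by (auto simp: divide_right_mono)
  show ?thesis unfolding fx using d by simp
qed

lemma card2: assumes "1-q = hmin j"
  shows "finite (fixpts q (2*j+3)) \<and> card (fixpts q (2*j+3)) = 2"
proof -
  define a where "a = 1-q"
  have a: "a = hmin j" "a \<le> 1" "0 < a" using assms hmin_gt[of j] hmin_lt1[of j] unfolding a_def by auto
  have yz1: "1/2 < yz j" "yz j < 1" using yz by auto
  have S: "{y. 0<y \<and> y\<le>1 \<and> hh j y = a} = {yz j}"
  proof (rule set_eqI, rule iffI)
    fix y assume y: "y \<in> {y. 0<y \<and> y\<le>1 \<and> hh j y = a}"
    show "y \<in> {yz j}"
    proof (cases "y \<le> yz j")
      case True
      then have "y = yz j" using hh_inj_left[of y j "yz j"] y yz1 a unfolding hmin_def by auto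
      then show ?thesis by simp
    next
      case False
      then have "y = yz j" using hh_inj_right[of j y "yz j"] y yz1 a unfolding hmin_def by auto
      then show ?thesis by simp
    qed
  next
    fix y assume "y \<in> {yz j}"
    then show "y \<in> {y. 0<y \<and> y\<le>1 \<and> hh j y = a}" using yz1 a unfolding hmin_def by auto
  qed
  have fx: "fixpts q (2*j+3) = {0, yz j/a}"
    using fix_char[of q j] a S unfolding a_def by simp
  have d: "0 \<noteq> yz j/a" using a yz1 by auto
  show ?thesis unfolding fx using d by simp
qed

lemma card1: assumes "0 \<le> 1-q" "1-q < hmin j"
  shows "fixpts q (2*j+3) = {0}"
proof (cases "q = 1")
  case True then show ?thesis using fix_q1 by simp
next
  case False
  define a where "a = 1-q"
  have a: "a < hmin j" "a \<le> 1" "0 < a" using assms False hmin_lt1[of j] unfolding a_def by auto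
  have S: "{y. 0<y \<and> y\<le>1 \<and> hh j y = a} = {}"
    using hmin_le[of _ j] a by force
  show ?thesis using fix_char[of q j] a S unfolding a_def by simp
qed

lemma pstar_eq: assumes "hmin j \<le> 8/9" shows "pstar (2*j+3) = 1 - hmin j"
  unfolding pstar_def
proof (rule the_equality)
  have g: "1/2 < hmin j" "hmin j < 1" using hmin_gt hmin_lt1 by auto
  show "1/9 \<le> 1 - hmin j \<and> 1 - hmin j < 1/2
     \<and> (\<forall>q. 0 \<le> q \<and> q < 1 - hmin j \<longrightarrow> finite (fixpts q (2*j+3)) \<and> card (fixpts q (2*j+3)) = 3)
     \<and> finite (fixpts (1 - hmin j) (2*j+3)) \<and> card (fixpts (1 - hmin j) (2*j+3)) = 2
     \<and> (\<forall>q. 1 - hmin j < q \<and> q \<le> 1 \<longrightarrow> fixpts q (2*j+3) = {0})"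
  proof (intro conjI allI impI)
    fix q assume "0 \<le> q \<and> q < 1 - hmin j"
    then show "finite (fixpts q (2*j+3))" "card (fixpts q (2*j+3)) = 3" using card3[of j q] by auto
  next
    fix q assume "1 - hmin j < q \<and> q \<le> 1"
    then show "fixpts q (2*j+3) = {0}" using card1[of q j] by auto
  next
    show "finite (fixpts (1 - hmin j) (2*j+3))" "card (fixpts (1 - hmin j) (2*j+3)) = 2"
      using card2[of "1 - hmin j" j] by auto
  qed (use g assms in auto)
next
  fix p assume P: "1/9 \<le> p \<and> p < 1/2
     \<and> (\<forall>q. 0 \<le> q \<and> q < p \<longrightarrow> finite (fixpts q (2*j+3)) \<and> card (fixpts q (2*j+3)) = 3)
     \<and> finite (fixpts p (2*j+3)) \<and> card (fixpts p (2*j+3)) = 2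
     \<and> (\<forall>q. p < q \<and> q \<le> 1 \<longrightarrow> fixpts q (2*j+3) = {0})"
  have g: "1/2 < hmin j" "hmin j < 1" using hmin_gt hmin_lt1 by auto
  have c2: "card (fixpts (1 - hmin j) (2*j+3)) = 2" using card2[of "1 - hmin j" j] by auto
  show "p = 1 - hmin j"
  proof (rule ccontr)
    assume "p \<noteq> 1 - hmin j"
    then consider "p < 1 - hmin j" | "p > 1 - hmin j" by linarith
    then show False
    proof cases
      case 1
      then have "fixpts (1 - hmin j) (2*j+3) = {0}" using P g by auto
      then show False using c2 by simp
    next
      case 2
      then have "card (fixpts (1 - hmin j) (2*j+3)) = 3" using P g by auto
      then show False using c2 by simp
    qed
  qed
qed

lemma Lf_bound: assumes "1/2 \<le> y" "y \<le> 1" shows "Lf j y \<le> 2 * (4*y*(1-y))^(j+1)"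
proof -
  have "Lf j y \<le> (\<Sum>i\<le>j+1. real ((2*j+3) choose i) * (y^(j+1) * (1-y)^(j+2)))"
    unfolding Lf_def
  proof (rule sum_mono)
    fix i assume i: "i \<in> {..j+1}"
    have n1: "2*j+3-i = (j+1-i) + (j+2)" using i by auto
    have e: "(1-y)^(2*j+3-i) = (1-y)^(j+1-i) * (1-y)^(j+2)"
      unfolding n1 by (rule power_add)
    have n2: "j+1 = i + (j+1-i)" using i by auto
    have e2: "y^(j+1) = y^i * y^(j+1-i)" by (subst n2) (rule power_add)
    have "(1-y)^(j+1-i) \<le> y^(j+1-i)" using assms by (intro power_mono) auto
    then have "y^i * (1-y)^(2*j+3-i) \<le> y^(j+1) * (1-y)^(j+2)"
      unfolding e e2 using assms by (simp add: mult.assoc mult_left_mono mult_right_mono)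
    then show "real ((2*j+3) choose i) * y^i * (1-y)^(2*j+3-i) \<le> real ((2*j+3) choose i) * (y^(j+1) * (1-y)^(j+2))"
      by (simp add: mult.assoc mult_left_mono)
  qed
  also have "\<dots> = real (\<Sum>i\<le>j+1. ((2*j+3) choose i)) * (y^(j+1) * (1-y)^(j+2))"
    by (simp only: of_nat_sum sum_distrib_right)
  also have "\<dots> \<le> real (\<Sum>i\<le>2*j+3. ((2*j+3) choose i)) * (y^(j+1) * (1-y)^(j+2))"
    using assms by (intro mult_right_mono of_nat_mono sum_mono2) auto
  also have "\<dots> = 2^(2*j+3) * (y^(j+1) * (1-y)^(j+2))" by (simp add: choose_row_sum)
  also have "\<dots> = 2 * (4*y*(1-y))^(j+1) * (1-y)"
  proof -
    have "(2::real)^(2*j+3) = 2 * 4^(j+1)" by (simp add: power_add power_mult)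
    then show ?thesis by (simp add: power_mult_distrib)
  qed
  also have "\<dots> \<le> 2 * (4*y*(1-y))^(j+1)"
    using assms by (intro mult_left_le) auto
  finally show ?thesis .
qed

lemma hmin_lim: "hmin \<longlonglongrightarrow> 1/2"
proof (rule tendstoI)
  fix e :: real assume e: "0 < e"
  define d where "d = min e (1/2) / 2"
  have d: "0 < d" "d < e" "d \<le> 1/4" using e unfolding d_def by auto
  define y where "y = 1/2 + d"
  define r where "r = 4*y*(1-y)"
  have re: "r = 1 - 4*(d*d)" unfolding r_def y_def by (simp add: algebra_simps)
  have dd: "d*d \<le> (1/4)*(1/4)" using d by (intro mult_mono) auto
  have "0 < d*d" using d by simp
  then have r: "0 \<le> r" "r < 1" unfolding re using dd by linarith+
  define eta where "eta = 1 - y/(1/2+e)"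
  have eta: "0 < eta" unfolding eta_def y_def using d e by (simp add: field_simps)
  have "(\<lambda>n. r^n) \<longlonglongrightarrow> 0" using r by (intro LIMSEQ_power_zero) auto
  then have ev: "eventually (\<lambda>n. r^n < eta/2) sequentially" using eta by (intro order_tendstoD(2)) auto
  show "eventually (\<lambda>j. dist (hmin j) (1/2) < e) sequentially"
    using ev
  proof (rule eventually_mono)
    fix j assume rj: "r^j < eta/2"
    have "r^(j+1) \<le> r^j" using r by (intro power_decreasing) auto
    have y01: "1/2 \<le> y" "y \<le> 1" unfolding y_def using d by auto
    have "Lf j y \<le> 2 * r^(j+1)" unfolding r_def using Lf_bound[OF y01, of j] by simp
    then have G: "Gf j y > 1 - eta" using Gf_Lf[of j y] rj \<open>r^(j+1) \<le> r^j\<close> by linarith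
    have Gp: "0 < Gf j y" using Gf_pos[of y j] y01 by auto
    have "y < Gf j y * (1/2+e)" using G e unfolding eta_def by (simp add: field_simps)
    then have "hh j y < 1/2 + e" unfolding hh_def using Gp by (simp add: divide_less_eq mult.commute)
    moreover have "hmin j \<le> hh j y" using hmin_le[of y j] y01 by auto
    moreover have "1/2 < hmin j" by (rule hmin_gt)
    ultimately show "dist (hmin j) (1/2) < e" unfolding dist_real_def by auto
  qed
qed

theorem lemmaA9:
  shows "(\<lambda>j. pstar (2 * j + 3)) \<longlonglongrightarrow> 1 / 2"
proof -
  have ev: "eventually (\<lambda>j. hmin j < 8/9) sequentially"
    using hmin_lim by (rule order_tendstoD(2)) simp
  have ev2: "eventually (\<lambda>j. 1 - hmin j = pstar (2*j+3)) sequentially"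
    using ev by (rule eventually_mono) (simp add: pstar_eq)
  have "(\<lambda>j. 1 - hmin j) \<longlonglongrightarrow> 1 - 1/2"
    by (intro tendsto_diff tendsto_const hmin_lim)
  then have "(\<lambda>j. 1 - hmin j) \<longlonglongrightarrow> 1/2" by simp
  then show ?thesis using tendsto_cong[OF ev2] by simp
qed

end
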